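(* Let $B$ be a symmetric positive definite $3\times3$ matrix and put $A=A(B)$, $\mathbb A=\mathbb A(B)$, $\mathbb C=\mathbb C(B)$. Then for every real $3\times3$ matrix $M$, $$\mathbb C:(B\cdot M+M^T\cdot B)=(\operatorname{tr}M)\,A+M\cdot A+A\cdot M^T-2\,\mathbb A:M.$$
   Context: For a symmetric positive definite matrix $B$, $$A(B)=\tfrac12\int_0^\infty \frac{(B+sI)^{-1}\,ds}{\sqrt{\det(B+sI)}},\quad \mathbb A(B)=\tfrac34\int_0^\infty\frac{s\,\mathcal S\big((B+sI)^{-1}\otimes(B+sI)^{-1}\big)\,ds}{\sqrt{\det(B+sI)}},\quad \mathbb C(B)=\tfrac34\int_0^\infty\frac{\mathcal S\big((B+sI)^{-1}\otimes(B+sI)^{-1}\big)\,ds}{\sqrt{\det(B+sI)}},$$ where $\mathcal S(\mathbb T)_{ijkl}$ is the average of $\mathbb T_{mnpq}$ over all permutations $(m,n,p,q)$ of $(i,j,k,l)$, and $(\mathbb T:M)_{ij}=\sum_{k,l}\mathbb T_{ijkl}M_{kl}$. *)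

theory Defs
  imports "HOL-Analysis.Analysis"
begin

type_synonym mat3 = "real^3^3"
type_synonym tensor4 = "3 \<Rightarrow> 3 \<Rightarrow> 3 \<Rightarrow> 3 \<Rightarrow> real"

definition sym_posdef :: "mat3 \<Rightarrow> bool" where
  "sym_posdef B \<longleftrightarrow> transpose B = B \<and> (\<forall>x. x \<noteq> 0 \<longrightarrow> x \<bullet> (B *v x) > 0)"

definition resolv :: "mat3 \<Rightarrow> real \<Rightarrow> mat3" where
  "resolv B s = matrix_inv (B + s *\<^sub>R mat 1)"

definition tprod :: "mat3 \<Rightarrow> mat3 \<Rightarrow> tensor4" where
  "tprod P Q i j k l = P $ i $ j * Q $ k $ l"

definition symm :: "tensor4 \<Rightarrow> tensor4" where
  "symm T i j k l = (let x = (\<lambda>n::nat. [i, j, k, l] ! n) in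
     (\<Sum>\<sigma>\<in>{\<sigma>. \<sigma> permutes {0..<4::nat}}. T (x (\<sigma> 0)) (x (\<sigma> 1)) (x (\<sigma> 2)) (x (\<sigma> 3))) / 24)"

definition contr :: "tensor4 \<Rightarrow> mat3 \<Rightarrow> mat3" where
  "contr T M = (\<chi> i j. \<Sum>k\<in>UNIV. \<Sum>l\<in>UNIV. T i j k l * M $ k $ l)"

definition Amat :: "mat3 \<Rightarrow> mat3" where
  "Amat B = (1/2) *\<^sub>R integral {0..} (\<lambda>s. (1 / sqrt (det (B + s *\<^sub>R mat 1))) *\<^sub>R resolv B s)"

definition AA :: "mat3 \<Rightarrow> tensor4" where
  "AA B i j k l = (3/4) * integral {0..}
     (\<lambda>s. s * symm (tprod (resolv B s) (resolv B s)) i j k l / sqrt (det (B + s *\<^sub>R mat 1)))"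

definition CC :: "mat3 \<Rightarrow> tensor4" where
  "CC B i j k l = (3/4) * integral {0..}
     (\<lambda>s. symm (tprod (resolv B s) (resolv B s)) i j k l / sqrt (det (B + s *\<^sub>R mat 1)))"

end

theory Submission
  imports Defs "HOL-Combinatorics.Permutations"
begin


definition nx :: "3 \<Rightarrow> 3" where "nx i = (if i = 1 then 2 else if i = 2 then 3 else 1)"

definition adj3 :: "mat3 \<Rightarrow> mat3" where
  "adj3 P = (\<chi> i j. P$(nx j)$(nx i) * P$(nx (nx j))$(nx (nx i)) - P$(nx j)$(nx (nx i)) * P$(nx (nx j))$(nx i))"

lemma adj3_right: "P ** adj3 P = det P *\<^sub>R mat 1"
  unfolding matrix_matrix_mult_def adj3_def
  by (simp add: vec_eq_iff forall_3 sum_3 det_3 nx_def mat_def) algebra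

lemma adj3_left: "adj3 P ** P = det P *\<^sub>R mat 1"
  unfolding matrix_matrix_mult_def adj3_def
  by (simp add: vec_eq_iff forall_3 sum_3 det_3 nx_def mat_def) algebra




lemma perm4: "{0..<4::nat} = insert 0 (insert 1 (insert 2 (insert 3 {})))" by auto

lemma symm_expand: "symm T i j k l = (T i j k l + T i j l k +
     (T i k j l + T i k l j + (T i l k j + T i l j k)) +
     (T j i k l + T j i l k +
      (T j k i l + T j k l i + (T j l k i + T j l i k)) +
      (T k j i l + T k j l i +
       (T k i j l + T k i l j + (T k l i j + T k l j i)) +
       (T l j k i + T l j i k +
        (T l k j i + T l k i j + (T l i k j + T l i j k)))))) / 24"
  unfolding symm_def perm4 Let_def
  apply (subst sum_over_permutations_insert, simp, simp)
  apply (subst sum_over_permutations_insert, simp, simp)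
  apply (subst sum_over_permutations_insert, simp, simp)
  apply (subst sum_over_permutations_insert, simp, simp)
  apply (simp add: Transposition.transpose_def)
  done

lemma symm_tprod:
  assumes "transpose R = R"
  shows "symm (tprod R R) i j k l = (R$i$j * R$k$l + R$i$k * R$j$l + R$i$l * R$j$k) / 3"
proof -
  have s: "R$a$b = R$b$a" for a b using arg_cong[OF assms, of "\<lambda>M. M$b$a"] by (simp add: transpose_def)
  show ?thesis
  unfolding symm_expand tprod_def
  apply (simp only: s[of j i] s[of k i] s[of l i] s[of k j] s[of l j] s[of l k])
  apply (simp add: divide_simps)
  done
qed


lemma contr_symm_tprod:
  assumes tR: "transpose R = R"
  shows "contr (symm (tprod R R)) X = (1/3) *\<^sub>R (trace (R ** X) *\<^sub>R R + R ** X ** R + R ** transpose X ** R)"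
proof -
  have s: "R$a$b = R$b$a" for a b using arg_cong[OF tR, of "\<lambda>M. M$b$a"] by (simp add: transpose_def)
  show ?thesis
    unfolding contr_def symm_tprod[OF tR]
    apply (simp add: vec_eq_iff sum_3 matrix_matrix_mult_def trace_def transpose_def)
    apply (intro allI)
    subgoal for i j
      apply (simp only: s[of 1 i] s[of 2 i] s[of 3 i] s[of 1 j] s[of 2 j] s[of 3 j] s[of 2 1] s[of 3 1] s[of 3 2])
      apply (simp add: algebra_simps add_divide_distrib)
      done
    done
qed

lemma mm_sub_l: "(A::mat3) ** (B - C) = A ** B - A ** C"
  by (simp add: matrix_matrix_mult_def vec_eq_iff sum_3 algebra_simps)
lemma mm_sub_r: "((A::mat3) - B) ** C = A ** C - B ** C"
  by (simp add: matrix_matrix_mult_def vec_eq_iff sum_3 algebra_simps)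
lemma mm_add_l: "(A::mat3) ** (B + C) = A ** B + A ** C"
  by (simp add: matrix_matrix_mult_def vec_eq_iff sum_3 algebra_simps)
lemma mm_add_r: "((A::mat3) + B) ** C = A ** C + B ** C"
  by (simp add: matrix_matrix_mult_def vec_eq_iff sum_3 algebra_simps)
lemma mm_scale_l: "(A::mat3) ** (c *\<^sub>R B) = c *\<^sub>R (A ** B)"
  by (simp add: matrix_matrix_mult_def vec_eq_iff sum_3 algebra_simps)
lemma mm_scale_r: "(c *\<^sub>R (A::mat3)) ** B = c *\<^sub>R (A ** B)"
  by (simp add: matrix_matrix_mult_def vec_eq_iff sum_3 algebra_simps)
lemma tr_add: "trace ((A::mat3) + B) = trace A + trace B"
  by (simp add: trace_def sum_3)
lemma tr_sub: "trace ((A::mat3) - B) = trace A - trace B"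
  by (simp add: trace_def sum_3)
lemma tr_scale: "trace (c *\<^sub>R (A::mat3)) = c * trace A"
  by (simp add: trace_def sum_3 algebra_simps)
lemma tr_comm: "trace ((A::mat3) ** B) = trace (B ** A)"
  by (simp add: trace_def sum_3 matrix_matrix_mult_def algebra_simps)
lemma tr_transp: "trace (transpose (A::mat3)) = trace A"
  by (simp add: trace_def sum_3 transpose_def)
lemma tr_id: "trace (mat 1 :: mat3) = 3"
  by (simp add: trace_def sum_3 mat_def)

lemma pointwise:
  fixes B M R :: mat3 and s :: real
  assumes RP: "R ** (B + s *\<^sub>R mat 1) = mat 1" and PR: "(B + s *\<^sub>R mat 1) ** R = mat 1"
   and tR: "transpose R = R" and tB: "transpose B = B"
  shows "(3/4) *\<^sub>R contr (symm (tprod R R)) (B ** M + transpose M ** B)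
    = (1/2) *\<^sub>R (trace M *\<^sub>R R + M ** R + R ** transpose M) - (3/2 * s) *\<^sub>R contr (symm (tprod R R)) M"
proof -
  define X where "X = B ** M + transpose M ** B"
  have RB: "R ** B = mat 1 - s *\<^sub>R R"
    using RP by (simp add: mm_add_l mm_scale_l algebra_simps)
  have BR: "B ** R = mat 1 - s *\<^sub>R R"
    using PR by (simp add: mm_add_r mm_scale_r algebra_simps)
  have tX: "transpose X = X"
  proof -
    have ta: "transpose (A + C) = transpose A + transpose C" for A C :: mat3
      by (simp add: transpose_def vec_eq_iff)
    show ?thesis unfolding X_def ta matrix_transpose_mul tB transpose_transpose by (simp add: add.commute)
  qed
  have RXR: "R ** X ** R = M ** R - s *\<^sub>R (R ** M ** R) + R ** transpose M - s *\<^sub>R (R ** transpose M ** R)"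
  proof -
    have "R ** X ** R = (R ** B) ** M ** R + R ** transpose M ** (B ** R)"
      unfolding X_def by (simp add: mm_add_l mm_add_r matrix_mul_assoc)
    also have "\<dots> = M ** R - s *\<^sub>R (R ** M ** R) + R ** transpose M - s *\<^sub>R (R ** transpose M ** R)"
      unfolding RB BR by (simp add: mm_sub_l mm_sub_r mm_scale_l mm_scale_r matrix_mul_assoc)
    finally show ?thesis .
  qed
  have trRX: "trace (R ** X) = 2 * trace M - 2 * s * trace (R ** M)"
  proof -
    have "trace (R ** X) = trace ((R ** B) ** M) + trace (transpose M ** (B ** R))"
      unfolding X_def mm_add_l tr_add by (metis tr_comm matrix_mul_assoc)
    also have "\<dots> = trace M - s * trace (R ** M) + trace (transpose M) - s * trace (transpose M ** R)"
      unfolding RB BR by (simp add: mm_sub_l mm_sub_r mm_scale_l mm_scale_r tr_sub tr_scale)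
    also have "trace (transpose M ** R) = trace (R ** M)"
      using tr_transp[of "transpose M ** R"] by (simp add: matrix_transpose_mul tR tr_comm)
    finally show ?thesis by (simp add: tr_transp)
  qed
  show ?thesis
    unfolding X_def[symmetric] contr_symm_tprod[OF tR] tX RXR trRX
    by (simp add: vec_eq_iff algebra_simps)
qed


definition v3 :: "real \<Rightarrow> real \<Rightarrow> real \<Rightarrow> real^3" where
  "v3 a b c = (\<chi> i. if i = 1 then a else if i = 2 then b else c)"

lemma v3_nth[simp]: "v3 a b c $ 1 = a" "v3 a b c $ 2 = b" "v3 a b c $ 3 = c"
  by (simp_all add: v3_def)

lemma qf: "v3 a b c \<bullet> (B *v v3 a b c) =
   a * (B$1$1 * a + B$1$2 * b + B$1$3 * c) + b * (B$2$1 * a + B$2$2 * b + B$2$3 * c)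
   + c * (B$3$1 * a + B$3$2 * b + B$3$3 * c)"
  by (simp add: inner_vec_def matrix_vector_mult_def sum_3)

lemma v3_eq0: "v3 a b c = 0 \<longleftrightarrow> a = 0 \<and> b = 0 \<and> c = 0"
  by (auto simp: vec_eq_iff forall_3)

lemma det_shift: "det (B + s *\<^sub>R mat 1 :: mat3) = s^3 + (B$1$1 + B$2$2 + B$3$3) * s^2
   + ((B$1$1*B$2$2 - B$1$2*B$2$1) + (B$1$1*B$3$3 - B$1$3*B$3$1) + (B$2$2*B$3$3 - B$2$3*B$3$2)) * s + det B"
  by (simp add: det_3 mat_def power2_eq_square power3_eq_cube algebra_simps)

lemma posdef_facts:
  assumes "sym_posdef B"
  shows "B$1$1 > 0" "B$2$2 > 0" "B$3$3 > 0"
    "B$1$1*B$2$2 - B$1$2*B$2$1 > 0" "B$1$1*B$3$3 - B$1$3*B$3$1 > 0" "B$2$2*B$3$3 - B$2$3*B$3$2 > 0"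
    "det B > 0"
proof -
  have tB: "transpose B = B" and pd: "\<And>x. x \<noteq> 0 \<Longrightarrow> x \<bullet> (B *v x) > 0"
    using assms unfolding sym_posdef_def by auto
  have s: "B$a$b = B$b$a" for a b using arg_cong[OF tB, of "\<lambda>M. M$b$a"] by (simp add: transpose_def)
  have pdv: "v3 a b c \<bullet> (B *v v3 a b c) > 0" if "\<not> (a = 0 \<and> b = 0 \<and> c = 0)" for a b c
    using pd[of "v3 a b c"] that by (simp add: v3_eq0)
  show b1: "B$1$1 > 0" using pdv[of 1 0 0] by (simp add: qf)
  show b2: "B$2$2 > 0" using pdv[of 0 1 0] by (simp add: qf)
  show b3: "B$3$3 > 0" using pdv[of 0 0 1] by (simp add: qf)
  have "B$1$1 * (B$1$1*B$2$2 - B$1$2*B$2$1) > 0"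
    using pdv[of "B$1$2" "-B$1$1" 0] b1 by (simp add: qf s[of 2 1] algebra_simps power2_eq_square)
  then show m12: "B$1$1*B$2$2 - B$1$2*B$2$1 > 0" using b1 by (simp add: zero_less_mult_iff)
  have "B$1$1 * (B$1$1*B$3$3 - B$1$3*B$3$1) > 0"
    using pdv[of "B$1$3" 0 "-B$1$1"] b1 by (simp add: qf s[of 3 1] algebra_simps power2_eq_square)
  then show "B$1$1*B$3$3 - B$1$3*B$3$1 > 0" using b1 by (simp add: zero_less_mult_iff)
  have "B$2$2 * (B$2$2*B$3$3 - B$2$3*B$3$2) > 0"
    using pdv[of 0 "B$2$3" "-B$2$2"] b2 by (simp add: qf s[of 3 2] algebra_simps power2_eq_square)
  then show "B$2$2*B$3$3 - B$2$3*B$3$2 > 0" using b2 by (simp add: zero_less_mult_iff)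
  have id: "v3 (adj3 B$1$3) (adj3 B$2$3) (adj3 B$3$3) \<bullet> (B *v v3 (adj3 B$1$3) (adj3 B$2$3) (adj3 B$3$3))
     = det B * (B$1$1*B$2$2 - B$1$2*B$2$1)"
    unfolding qf by (simp add: adj3_def nx_def det_3) algebra
  have "adj3 B$3$3 = B$1$1*B$2$2 - B$1$2*B$2$1" by (simp add: adj3_def nx_def)
  then have "det B * (B$1$1*B$2$2 - B$1$2*B$2$1) > 0"
    using pdv[of "adj3 B$1$3" "adj3 B$2$3" "adj3 B$3$3"] m12 id by auto
  then show "det B > 0" using m12 by (simp add: zero_less_mult_iff)
qed

lemma det_lower:
  assumes "sym_posdef B" "s \<ge> 0"
  shows "det (B + s *\<^sub>R mat 1) \<ge> (min (det B) 1 / 4) * (1 + s)^3"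
proof -
  note f = posdef_facts[OF assms(1)]
  have "det (B + s *\<^sub>R mat 1) \<ge> s^3 + det B"
    unfolding det_shift using f assms(2)
    by (intro add_mono order_refl) (auto intro!: add_nonneg_nonneg mult_nonneg_nonneg)
  moreover have "s^3 + det B \<ge> min (det B) 1 * (1 + s^3)"
    using assms(2) f(7) by (auto simp: min_def algebra_simps intro!: mult_left_le_one_le)
  moreover have "(1+s)^3 \<le> 4 * (1 + s^3)"
  proof -
    have "4 * (1 + s^3) - (1+s)^3 = 3 * (1-s)^2 * (1+s)" by (simp add: power2_eq_square power3_eq_cube algebra_simps)
    moreover have "3 * (1-s)^2 * (1+s) \<ge> 0" using assms(2) by simp
    ultimately show ?thesis by linarith
  qed
  moreover have "min (det B) 1 \<ge> 0" using f by simp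
  ultimately have "min (det B) 1 * ((1+s)^3 / 4) \<le> min (det B) 1 * (1 + s^3)"
    by (intro mult_left_mono) auto
  with \<open>det (B + s *\<^sub>R mat 1) \<ge> s^3 + det B\<close> \<open>s^3 + det B \<ge> min (det B) 1 * (1 + s^3)\<close>
  show ?thesis by simp
qed


lemma matrix_inv_eq:
  fixes A X :: mat3
  assumes "A ** X = mat 1" "X ** A = mat 1"
  shows "matrix_inv A = X"
proof -
  have ex: "\<exists>A'::mat3. A ** A' = mat 1 \<and> A' ** A = mat 1" using assms by blast
  define Y where "Y = (SOME A'::mat3. A ** A' = mat 1 \<and> A' ** A = mat 1)"
  have Y: "A ** Y = mat 1 \<and> Y ** A = mat 1" unfolding Y_def using someI_ex[OF ex] .
  have "Y = Y ** (A ** X)" using assms by simp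
  also have "\<dots> = (Y ** A) ** X" by (simp add: matrix_mul_assoc)
  also have "\<dots> = X" using Y by simp
  finally show ?thesis unfolding matrix_inv_def Y_def by simp
qed

definition mu :: "mat3 \<Rightarrow> real" where "mu B = min (det B) 1 / 4"

lemma mu_pos: "sym_posdef B \<Longrightarrow> mu B > 0"
  using posdef_facts(7)[of B] by (simp add: mu_def)

lemma det_pos: "sym_posdef B \<Longrightarrow> s \<ge> 0 \<Longrightarrow> det (B + s *\<^sub>R mat 1) > 0"
  using det_lower[of B s] mu_pos[of B] unfolding mu_def[symmetric]
  by (smt (verit) mult_pos_pos zero_less_power)

lemma resolv_formula:
  assumes "sym_posdef B" "s \<ge> 0"
  shows "resolv B s = (1 / det (B + s *\<^sub>R mat 1)) *\<^sub>R adj3 (B + s *\<^sub>R mat 1)"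
proof -
  have d: "det (B + s *\<^sub>R mat 1) \<noteq> 0" using det_pos[OF assms] by simp
  show ?thesis unfolding resolv_def
    by (rule matrix_inv_eq) (simp_all add: mm_scale_l mm_scale_r adj3_right adj3_left d)
qed

lemma resolv_props:
  assumes "sym_posdef B" "s \<ge> 0"
  shows "resolv B s ** (B + s *\<^sub>R mat 1) = mat 1" "(B + s *\<^sub>R mat 1) ** resolv B s = mat 1"
    "transpose (resolv B s) = resolv B s"
proof -
  have d: "det (B + s *\<^sub>R mat 1) \<noteq> 0" using det_pos[OF assms] by simp
  show 1: "resolv B s ** (B + s *\<^sub>R mat 1) = mat 1" "(B + s *\<^sub>R mat 1) ** resolv B s = mat 1"
    unfolding resolv_formula[OF assms]
    by (simp_all add: mm_scale_l mm_scale_r adj3_right adj3_left d)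
  have tB: "transpose B = B" using assms(1) by (simp add: sym_posdef_def)
  have tP: "transpose (B + s *\<^sub>R mat 1) = B + s *\<^sub>R mat 1"
    using tB by (simp add: transpose_def vec_eq_iff mat_def)
  let ?R = "resolv B s" and ?P = "B + s *\<^sub>R mat 1"
  have "transpose ?R ** ?P = mat 1"
    using arg_cong[OF 1(2), of transpose] by (simp add: matrix_transpose_mul tP)
  then have "transpose ?R = transpose ?R ** (?P ** ?R)" using 1 by (simp add: matrix_mul_assoc)
  also have "\<dots> = ?R" using \<open>transpose ?R ** ?P = mat 1\<close> by (simp add: matrix_mul_assoc)
  finally show "transpose ?R = ?R" .
qed

lemma P_entry: "(B + s *\<^sub>R mat 1 :: mat3) $ x $ y = B $ x $ y + (if x = y then 1 else 0) * s"
  by (simp add: mat_def)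

lemma resolv_cont:
  assumes "sym_posdef B"
  shows "continuous_on {0..} (\<lambda>s. resolv B s $ a $ b)"
proof -
  have "continuous_on {0..} (\<lambda>s. adj3 (B + s *\<^sub>R mat 1) $ a $ b / det (B + s *\<^sub>R mat 1))"
    unfolding adj3_def det_shift
    apply (simp only: vec_lambda_beta P_entry)
    apply (intro continuous_intros)
    using det_pos[OF assms] unfolding det_shift by (auto simp del: vector_add_component vector_scaleR_component) (metis less_irrefl)
  then show ?thesis
    by (rule continuous_on_cong[THEN iffD1, rotated 2]) (auto simp: resolv_formula[OF assms])
qed

lemma det_cont: "continuous_on S (\<lambda>s. det (B + s *\<^sub>R mat 1 :: mat3))"
  unfolding det_shift by (intro continuous_intros)

definition NB :: "mat3 \<Rightarrow> real" where "NB B = (\<Sum>i\<in>UNIV. \<Sum>j\<in>UNIV. \<bar>B$i$j\<bar>) + 1"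

lemma NB_entry: "\<bar>B$i$j\<bar> \<le> NB B - 1"
proof -
  have "\<bar>B$i$j\<bar> \<le> (\<Sum>j\<in>UNIV. \<bar>B$i$j\<bar>)" by (rule member_le_sum) auto
  also have "\<dots> \<le> (\<Sum>i\<in>UNIV. \<Sum>j\<in>UNIV. \<bar>B$i$j\<bar>)" by (rule member_le_sum[of i, where f = "\<lambda>i. \<Sum>j\<in>UNIV. \<bar>B$i$j\<bar>"]) (auto intro: sum_nonneg)
  finally show ?thesis by (simp add: NB_def)
qed

lemma P_bound: "s \<ge> 0 \<Longrightarrow> \<bar>(B + s *\<^sub>R mat 1 :: mat3) $ x $ y\<bar> \<le> NB B * (1 + s)"
proof -
  assume s: "s \<ge> 0"
  have e: "\<bar>B$x$y\<bar> \<le> NB B - 1" by (rule NB_entry)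
  have "\<bar>B$x$y\<bar> \<ge> 0" by simp
  then have N1: "NB B \<ge> 1" using e by linarith
  have "\<bar>(B + s *\<^sub>R mat 1 :: mat3) $ x $ y\<bar> \<le> \<bar>B$x$y\<bar> + s" unfolding P_entry using s by auto
  also have "\<dots> \<le> NB B + NB B * s" using e N1 s by (smt (verit) mult_left_mono mult_cancel_right1 mult_le_cancel_right1)
  finally show ?thesis by (simp add: algebra_simps)
qed

lemma prod_diff_bound:
  fixes p1 p2 p3 p4 u :: real
  assumes "\<bar>p1\<bar> \<le> u" "\<bar>p2\<bar> \<le> u" "\<bar>p3\<bar> \<le> u" "\<bar>p4\<bar> \<le> u"
  shows "\<bar>p1 * p2 - p3 * p4\<bar> \<le> 2 * u^2"
proof -
  have "\<bar>p1 * p2\<bar> \<le> u * u" unfolding abs_mult using assms by (intro mult_mono) auto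
  moreover have "\<bar>p3 * p4\<bar> \<le> u * u" unfolding abs_mult using assms by (intro mult_mono) auto
  ultimately show ?thesis by (simp add: power2_eq_square)
qed

lemma adj_bound: "s \<ge> 0 \<Longrightarrow> \<bar>adj3 (B + s *\<^sub>R mat 1) $ a $ b\<bar> \<le> 2 * (NB B * (1 + s))^2"
  unfolding adj3_def vec_lambda_beta by (intro prod_diff_bound P_bound)

definition K1 :: "mat3 \<Rightarrow> real" where "K1 B = 2 * NB B ^ 2 / mu B"

lemma resolv_bound:
  assumes "sym_posdef B" "s \<ge> 0"
  shows "\<bar>resolv B s $ a $ b\<bar> \<le> K1 B / (1 + s)"
proof -
  let ?d = "det (B + s *\<^sub>R mat 1)"
  have dpos: "?d > 0" using det_pos[OF assms] .
  have dl: "?d \<ge> mu B * (1+s)^3" using det_lower[OF assms] by (simp add: mu_def)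
  have m: "mu B > 0" using mu_pos[OF assms(1)] .
  have "\<bar>resolv B s $ a $ b\<bar> = \<bar>adj3 (B + s *\<^sub>R mat 1) $ a $ b\<bar> / ?d"
    using dpos by (simp add: resolv_formula[OF assms])
  also have "\<dots> \<le> 2 * (NB B * (1 + s))^2 / (mu B * (1+s)^3)"
    using adj_bound[OF assms(2)] dl dpos m assms(2)
    by (intro frac_le) auto
  also have "\<dots> = K1 B / (1 + s)"
  proof -
    have ne: "1 + s \<noteq> 0" "mu B \<noteq> 0" using assms(2) m by auto
    have h: "u \<noteq> 0 \<Longrightarrow> mm \<noteq> 0 \<Longrightarrow> 2 * (N * u)^2 / (mm * u^3) = (2 * N^2 / mm) / u" for u N mm :: real
      by (simp add: field_simps power2_eq_square power3_eq_cube)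
    show ?thesis unfolding K1_def using h[OF ne] .
  qed
  finally show ?thesis .
qed

definition K2 :: "mat3 \<Rightarrow> real" where "K2 B = 1 / sqrt (mu B)"

lemma isqrt_bound:
  assumes "sym_posdef B" "s \<ge> 0"
  shows "1 / sqrt (det (B + s *\<^sub>R mat 1)) \<le> K2 B / (1 + s)"
proof -
  let ?d = "det (B + s *\<^sub>R mat 1)"
  have dl: "?d \<ge> mu B * (1+s)^3" using det_lower[OF assms] by (simp add: mu_def)
  have m: "mu B > 0" using mu_pos[OF assms(1)] .
  have "mu B * (1+s)^2 \<le> mu B * (1+s)^3" using m assms(2)
    by (intro mult_left_mono power_increasing) auto
  then have "sqrt (mu B * (1+s)^2) \<le> sqrt ?d" using dl by (intro real_sqrt_le_mono) linarith
  moreover have "sqrt (mu B * (1+s)^2) = sqrt (mu B) * (1 + s)" using assms(2) by (simp add: real_sqrt_mult)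
  ultimately have "sqrt (mu B) * (1 + s) \<le> sqrt ?d" by simp
  moreover have "sqrt (mu B) * (1 + s) > 0" using m assms(2) by simp
  ultimately have "1 / sqrt ?d \<le> 1 / (sqrt (mu B) * (1 + s))"
    using det_pos[OF assms] by (intro divide_left_mono) auto
  then show ?thesis unfolding K2_def by simp
qed


lemma int_inv_sq: "(\<lambda>s::real. 1 / (1 + s)^2) integrable_on {0..}"
proof -
  have "((\<lambda>s::real. 1 / (1 + s)^2) has_integral 1) {0..}"
  proof (rule has_integral_to_inf)
    show "(\<lambda>s::real. 1 / (1 + s)^2) integrable_on {0..y}" for y
      by (intro integrable_continuous_interval continuous_intros) auto
    have "((\<lambda>s::real. 1 / (1 + s)^2) has_integral (1 - 1 / (1 + y))) {0..y}" if "y \<ge> 0" for y :: real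
    proof -
      have "((\<lambda>s::real. 1 / (1 + s)^2) has_integral ((- 1 / (1 + y)) - (- 1 / (1 + 0)))) {0..y}"
        using that
        by (intro fundamental_theorem_of_calculus)
           (auto intro!: derivative_eq_intros simp flip: has_real_derivative_iff_has_vector_derivative
                 simp: power2_eq_square field_simps)
      then show ?thesis by simp
    qed
    then have "\<forall>\<^sub>F y in at_top. integral {0..y} (\<lambda>s::real. 1 / (1 + s)^2) = 1 - 1 / (1 + y)"
      by (meson eventually_at_top_linorderI integral_unique)
    moreover have "((\<lambda>y::real. 1 - 1 / (1 + y)) \<longlongrightarrow> 1) at_top"
    proof -
      have "filterlim (\<lambda>y::real. 1 + y) at_top at_top"
        by (rule filterlim_tendsto_add_at_top[OF tendsto_const filterlim_ident])
      then have "((\<lambda>y::real. inverse (1 + y)) \<longlongrightarrow> 0) at_top" by (rule tendsto_inverse_0_at_top)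
      then have "((\<lambda>y::real. 1 - inverse (1 + y)) \<longlongrightarrow> 1 - 0) at_top" by (intro tendsto_intros)
      then show ?thesis by (simp add: divide_inverse)
    qed
    ultimately show "((\<lambda>y. integral {0..y} (\<lambda>s::real. 1 / (1 + s)^2)) \<longlongrightarrow> 1) at_top"
      by (simp add: filterlim_cong)
  qed auto
  then show ?thesis by blast
qed

lemma integrable_by_bound:
  fixes f :: "real \<Rightarrow> real"
  assumes "continuous_on {0..} f" "\<And>s. s \<ge> 0 \<Longrightarrow> \<bar>f s\<bar> \<le> C / (1 + s)^2"
  shows "f integrable_on {0..}"
proof (rule measurable_bounded_by_integrable_imp_integrable_real)
  show "f \<in> borel_measurable (lebesgue_on {0..})"
    by (rule continuous_imp_measurable_on_sets_lebesgue[OF assms(1)]) simp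
  show "(\<lambda>s. C / (1 + s)^2) integrable_on {0..}"
    using integrable_cmul[OF int_inv_sq, of C] by simp
qed (use assms in auto)

lemma isqrt_cont:
  assumes "sym_posdef B"
  shows "continuous_on {0..} (\<lambda>s. 1 / sqrt (det (B + s *\<^sub>R mat 1)))"
  using det_pos[OF assms]
  by (intro continuous_intros det_cont) (auto simp: less_imp_neq[symmetric])

lemma symm_cont:
  assumes "sym_posdef B"
  shows "continuous_on {0..} (\<lambda>s. symm (tprod (resolv B s) (resolv B s)) i j k l)"
proof -
  have rc: "continuous_on {0..} (\<lambda>s. resolv B s $ x $ y)" for x y using resolv_cont[OF assms] .
  show ?thesis unfolding symm_expand tprod_def
    by (intro continuous_on_add continuous_on_mult continuous_on_divide continuous_on_const rc) auto
qed

lemma symm_bound: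
  assumes "sym_posdef B" "s \<ge> 0"
  shows "\<bar>symm (tprod (resolv B s) (resolv B s)) i j k l\<bar> \<le> (K1 B / (1 + s))^2"
proof -
  let ?R = "resolv B s" and ?q = "K1 B / (1 + s)"
  have b: "\<bar>?R $ a $ b\<bar> \<le> ?q" for a b using resolv_bound[OF assms] .
  have pb: "\<bar>?R $ a $ b * ?R $ c $ d\<bar> \<le> ?q^2" for a b c d
    unfolding abs_mult power2_eq_square using b[of a b] by (intro mult_mono b) (auto intro: order_trans[OF abs_ge_zero])
  have "\<bar>(?R$i$j * ?R$k$l + ?R$i$k * ?R$j$l + ?R$i$l * ?R$j$k) / 3\<bar> \<le> (?q^2 + ?q^2 + ?q^2) / 3"
    using pb[of i j k l] pb[of i k j l] pb[of i l j k] by (simp add: abs_le_iff)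
  moreover have e: "symm (tprod ?R ?R) i j k l = (?R$i$j * ?R$k$l + ?R$i$k * ?R$j$l + ?R$i$l * ?R$j$k) / 3"
    by (rule symm_tprod[OF resolv_props(3)[OF assms]])
  moreover have "(?q^2 + ?q^2 + ?q^2) / 3 = ?q^2" by simp
  ultimately show ?thesis by simp
qed

lemma K_nonneg: "sym_posdef B \<Longrightarrow> K1 B \<ge> 0 \<and> K2 B \<ge> 0"
  using mu_pos[of B] by (simp add: K1_def K2_def)

lemma int_CC:
  assumes "sym_posdef B"
  shows "(\<lambda>s. symm (tprod (resolv B s) (resolv B s)) i j k l / sqrt (det (B + s *\<^sub>R mat 1))) integrable_on {0..}"
proof (rule integrable_by_bound[where C = "K1 B ^ 2 * K2 B"])
  show "continuous_on {0..} (\<lambda>s. symm (tprod (resolv B s) (resolv B s)) i j k l / sqrt (det (B + s *\<^sub>R mat 1)))"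
    using continuous_on_mult[OF symm_cont[OF assms] isqrt_cont[OF assms]] by (simp add: divide_inverse)
  fix s :: real assume s: "s \<ge> 0"
  have g: "0 \<le> 1 / sqrt (det (B + s *\<^sub>R mat 1))" "1 / sqrt (det (B + s *\<^sub>R mat 1)) \<le> K2 B / (1 + s)"
    using isqrt_bound[OF assms s] det_pos[OF assms s] by auto
  have "\<bar>symm (tprod (resolv B s) (resolv B s)) i j k l * (1 / sqrt (det (B + s *\<^sub>R mat 1)))\<bar>
     \<le> (K1 B / (1 + s))^2 * (K2 B / (1 + s))"
    unfolding abs_mult using g symm_bound[OF assms s] by (intro mult_mono) auto
  also have "\<dots> \<le> (K1 B / (1 + s))^2 * K2 B"
    using K_nonneg[OF assms] s mult_left_mono[of 1 "1+s" "K2 B"] by (intro mult_left_mono) (auto simp: divide_simps)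
  also have "\<dots> = K1 B ^ 2 * K2 B / (1 + s)^2" by (simp add: power_divide)
  finally show "\<bar>symm (tprod (resolv B s) (resolv B s)) i j k l / sqrt (det (B + s *\<^sub>R mat 1))\<bar> \<le> K1 B ^ 2 * K2 B / (1 + s)^2"
    by simp
qed

lemma int_AA:
  assumes "sym_posdef B"
  shows "(\<lambda>s. s * symm (tprod (resolv B s) (resolv B s)) i j k l / sqrt (det (B + s *\<^sub>R mat 1))) integrable_on {0..}"
proof (rule integrable_by_bound[where C = "K1 B ^ 2 * K2 B"])
  show "continuous_on {0..} (\<lambda>s. s * symm (tprod (resolv B s) (resolv B s)) i j k l / sqrt (det (B + s *\<^sub>R mat 1)))"
    using continuous_on_mult[OF continuous_on_mult[OF continuous_on_id symm_cont[OF assms]] isqrt_cont[OF assms]]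
    by (simp add: divide_inverse)
  fix s :: real assume s: "s \<ge> 0"
  have g: "0 \<le> 1 / sqrt (det (B + s *\<^sub>R mat 1))" "1 / sqrt (det (B + s *\<^sub>R mat 1)) \<le> K2 B / (1 + s)"
    using isqrt_bound[OF assms s] det_pos[OF assms s] by auto
  have "\<bar>symm (tprod (resolv B s) (resolv B s)) i j k l * (1 / sqrt (det (B + s *\<^sub>R mat 1)))\<bar>
     \<le> (K1 B / (1 + s))^2 * (K2 B / (1 + s))"
    unfolding abs_mult using g symm_bound[OF assms s] by (intro mult_mono) auto
  then have "\<bar>s\<bar> * \<bar>symm (tprod (resolv B s) (resolv B s)) i j k l * (1 / sqrt (det (B + s *\<^sub>R mat 1)))\<bar>
     \<le> s * ((K1 B / (1 + s))^2 * (K2 B / (1 + s)))"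
    using s by (intro mult_mono) auto
  also have "\<dots> = (K1 B / (1 + s))^2 * K2 B * (s / (1 + s))" by simp
  also have "\<dots> \<le> (K1 B / (1 + s))^2 * K2 B * 1"
    using K_nonneg[OF assms] s by (intro mult_left_mono) (auto simp: divide_simps)
  also have "\<dots> = K1 B ^ 2 * K2 B / (1 + s)^2" by (simp add: power_divide)
  finally show "\<bar>s * symm (tprod (resolv B s) (resolv B s)) i j k l / sqrt (det (B + s *\<^sub>R mat 1))\<bar> \<le> K1 B ^ 2 * K2 B / (1 + s)^2"
    by (simp add: abs_mult)
qed

lemma int_A_entry:
  assumes "sym_posdef B"
  shows "(\<lambda>s. 1 / sqrt (det (B + s *\<^sub>R mat 1)) * resolv B s $ a $ b) integrable_on {0..}"
proof (rule integrable_by_bound[where C = "K1 B * K2 B"])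
  show "continuous_on {0..} (\<lambda>s. 1 / sqrt (det (B + s *\<^sub>R mat 1)) * resolv B s $ a $ b)"
    by (intro continuous_on_mult isqrt_cont[OF assms] resolv_cont[OF assms])
  fix s :: real assume s: "s \<ge> 0"
  have g: "0 \<le> 1 / sqrt (det (B + s *\<^sub>R mat 1))" "1 / sqrt (det (B + s *\<^sub>R mat 1)) \<le> K2 B / (1 + s)"
    using isqrt_bound[OF assms s] det_pos[OF assms s] by auto
  have "\<bar>1 / sqrt (det (B + s *\<^sub>R mat 1)) * resolv B s $ a $ b\<bar> \<le> (K2 B / (1 + s)) * (K1 B / (1 + s))"
    unfolding abs_mult using g resolv_bound[OF assms s] K_nonneg[OF assms] s by (intro mult_mono) auto
  also have "\<dots> = K1 B * K2 B / (1 + s)^2" by (simp add: power2_eq_square)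
  finally show "\<bar>1 / sqrt (det (B + s *\<^sub>R mat 1)) * resolv B s $ a $ b\<bar> \<le> K1 B * K2 B / (1 + s)^2" .
qed

lemma int_A:
  assumes "sym_posdef B"
  shows "(\<lambda>s. (1 / sqrt (det (B + s *\<^sub>R mat 1))) *\<^sub>R resolv B s) integrable_on {0..}"
  apply (rule integrable_componentwise)
  apply (auto simp: Basis_vec_def inner_axis)
  using int_A_entry[OF assms] by simp


lemma integral_entry:
  fixes f :: "real \<Rightarrow> mat3"
  assumes "f integrable_on S"
  shows "integral S f $ a $ b = integral S (\<lambda>s. f s $ a $ b)"
proof -
  have bl: "bounded_linear (\<lambda>M::mat3. M $ a $ b)"
    using bounded_linear_compose[OF bounded_linear_vec_nth[of b] bounded_linear_vec_nth[of a]] by simp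
  show ?thesis using integral_linear[OF assms bl] by (simp add: o_def)
qed

lemma hasint_sum2:
  fixes f :: "3 \<Rightarrow> 3 \<Rightarrow> real \<Rightarrow> real"
  assumes "\<And>k l. (f k l has_integral I k l) S"
  shows "((\<lambda>s. \<Sum>k\<in>UNIV. \<Sum>l\<in>UNIV. c k l * f k l s) has_integral (\<Sum>k\<in>UNIV. \<Sum>l\<in>UNIV. c k l * I k l)) S"
  by (intro has_integral_sum has_integral_mult_right assms) auto

lemma hasint_sum1:
  fixes f :: "3 \<Rightarrow> real \<Rightarrow> real"
  assumes "\<And>k. (f k has_integral I k) S"
  shows "((\<lambda>s. \<Sum>k\<in>UNIV. c k * f k s) has_integral (\<Sum>k\<in>UNIV. c k * I k)) S"
  by (intro has_integral_sum has_integral_mult_right assms) auto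

theorem mainTheorem4:
  fixes B M :: "real^3^3"
  assumes "sym_posdef B"
  shows "contr (CC B) (B ** M + transpose M ** B)
    = trace M *\<^sub>R Amat B + M ** Amat B + Amat B ** transpose M - 2 *\<^sub>R contr (AA B) M"
proof -
  define X where "X = B ** M + transpose M ** B"
  define g where "g s = sqrt (det (B + s *\<^sub>R mat 1))" for s
  define R where "R s = resolv B s" for s
  define F where "F s = symm (tprod (R s) (R s))" for s
  define h where "h a b s = 1 / g s * R s $ a $ b" for a b s
  define Ih where "Ih a b = integral {0..} (h a b)" for a b
  have gpos: "g s > 0" if "s \<ge> 0" for s unfolding g_def using det_pos[OF assms that] by simp
  have tB: "transpose B = B" using assms by (simp add: sym_posdef_def)
  have Hh: "(h a b has_integral Ih a b) {0..}" for a b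
    unfolding Ih_def h_def g_def R_def using int_A_entry[OF assms] by (simp add: integrable_integral)
  have Amat_e: "Amat B $ a $ b = 1/2 * Ih a b" for a b
  proof -
    have "integral {0..} (\<lambda>s. (1 / g s) *\<^sub>R R s) $ a $ b = integral {0..} (\<lambda>s. ((1 / g s) *\<^sub>R R s) $ a $ b)"
      by (rule integral_entry) (use int_A[OF assms] in \<open>simp add: g_def R_def\<close>)
    then show ?thesis unfolding Amat_def Ih_def h_def by (simp add: g_def R_def)
  qed
  show ?thesis
    unfolding X_def[symmetric]
  proof (simp only: vec_eq_iff, intro allI)
    fix i j
    define f where "f k l s = F s i j k l / g s" for k l s
    define e where "e k l s = s * F s i j k l / g s" for k l s
    define If where "If k l = integral {0..} (f k l)" for k l
    define Ie where "Ie k l = integral {0..} (e k l)" for k l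
    have Hf: "(f k l has_integral If k l) {0..}" for k l
      unfolding If_def f_def g_def F_def R_def using int_CC[OF assms] by (simp add: integrable_integral)
    have He: "(e k l has_integral Ie k l) {0..}" for k l
      unfolding Ie_def e_def g_def F_def R_def using int_AA[OF assms] by (simp add: integrable_integral)
    define \<phi> where "\<phi> s = (\<Sum>k\<in>UNIV. \<Sum>l\<in>UNIV. (3/4 * X$k$l) * f k l s)" for s
    define \<psi> where "\<psi> s = trace M * (1/2 * h i j s) + (\<Sum>k\<in>UNIV. (M$i$k / 2) * h k j s)
       + (\<Sum>k\<in>UNIV. (M$j$k / 2) * h i k s) - 2 * (\<Sum>k\<in>UNIV. \<Sum>l\<in>UNIV. (3/4 * M$k$l) * e k l s)" for s
    have H\<phi>: "(\<phi> has_integral (\<Sum>k\<in>UNIV. \<Sum>l\<in>UNIV. (3/4 * X$k$l) * If k l)) {0..}"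
      unfolding \<phi>_def by (rule hasint_sum2[OF Hf])
    have H\<psi>: "(\<psi> has_integral (trace M * (1/2 * Ih i j) + (\<Sum>k\<in>UNIV. (M$i$k / 2) * Ih k j)
       + (\<Sum>k\<in>UNIV. (M$j$k / 2) * Ih i k) - 2 * (\<Sum>k\<in>UNIV. \<Sum>l\<in>UNIV. (3/4 * M$k$l) * Ie k l))) {0..}"
      unfolding \<psi>_def
      by (intro has_integral_diff has_integral_add has_integral_mult_right hasint_sum1 hasint_sum2 Hh He)
    have eq: "\<phi> s = \<psi> s" if s: "s \<ge> 0" for s
    proof -
      have P: "(3/4) *\<^sub>R contr (F s) X
          = (1/2) *\<^sub>R (trace M *\<^sub>R R s + M ** R s + R s ** transpose M) - (3/2 * s) *\<^sub>R contr (F s) M"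
        unfolding F_def X_def R_def
        using pointwise[OF resolv_props(1,2,3)[OF assms s] tB] .
      have "((3/4) *\<^sub>R contr (F s) X) $ i $ j / g s
          = ((1/2) *\<^sub>R (trace M *\<^sub>R R s + M ** R s + R s ** transpose M) - (3/2 * s) *\<^sub>R contr (F s) M) $ i $ j / g s"
        using P by simp
      moreover have "\<phi> s = ((3/4) *\<^sub>R contr (F s) X) $ i $ j / g s"
        unfolding \<phi>_def f_def using gpos[OF s]
        by (simp add: contr_def sum_3 field_simps)
      moreover have "\<psi> s = ((1/2) *\<^sub>R (trace M *\<^sub>R R s + M ** R s + R s ** transpose M) - (3/2 * s) *\<^sub>R contr (F s) M) $ i $ j / g s"
        unfolding \<psi>_def e_def h_def using gpos[OF s]
        by (simp add: contr_def matrix_matrix_mult_def transpose_def sum_3 field_simps)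
      ultimately show ?thesis by simp
    qed
    have "(\<psi> has_integral (\<Sum>k\<in>UNIV. \<Sum>l\<in>UNIV. (3/4 * X$k$l) * If k l)) {0..}"
      using has_integral_eq[OF _ H\<phi>, of \<psi>] eq by auto
    then have main: "(\<Sum>k\<in>UNIV. \<Sum>l\<in>UNIV. (3/4 * X$k$l) * If k l) = trace M * (1/2 * Ih i j) + (\<Sum>k\<in>UNIV. (M$i$k / 2) * Ih k j)
       + (\<Sum>k\<in>UNIV. (M$j$k / 2) * Ih i k) - 2 * (\<Sum>k\<in>UNIV. \<Sum>l\<in>UNIV. (3/4 * M$k$l) * Ie k l)"
      using H\<psi> by (rule has_integral_unique)
    have CCe: "CC B i j k l = 3/4 * If k l" for k l
      unfolding CC_def If_def f_def F_def R_def g_def by simp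
    have AAe: "AA B i j k l = 3/4 * Ie k l" for k l
      unfolding AA_def Ie_def e_def F_def R_def g_def by simp
    show "contr (CC B) X $ i $ j = (trace M *\<^sub>R Amat B + M ** Amat B + Amat B ** transpose M - 2 *\<^sub>R contr (AA B) M) $ i $ j"
      using main
      by (simp add: contr_def CCe AAe Amat_e matrix_matrix_mult_def transpose_def sum_3 algebra_simps)
  qed
qed

end
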